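(* Let $T$ be a well-formed trace satisfying the initial-write property, let $e$ be a read and $f$ a write of $T$ that are conflicting, and suppose there is a correctly reordered prefix of $T$ in which $e$ appears immediately before $f$. Then there is no correctly reordered prefix of $T$ in which $f$ appears immediately before $e$.
   Context: Traces. A trace $T$ is a finite sequence of pairwise distinct events. Each event $e$ belongs to a thread $\mathrm{tid}(e)$ and is one of: a read $r(x)$ or write $w(x)$ of a shared variable $x$, or an acquire $acq(y)$ or release $rel(y)$ of a lock $y$. The projection of $T$ onto thread $i$ is the subsequence of events of thread $i$. $T$ is well-formed if a thread only acquires a lock not currently held and every release $rel(y)$ in thread $i$ has a matching earlier acquire $acq(y)$ in thread $i$ with no other acquire on $y$ in between. Two events are conflicting if they are reads/writes on the same variable, at least one is a write, and they belong to different threads. For a read $e$ on $x$, a write $f$ on $x$ is the last write of $e$ w.r.t. $T$ if $f$ precedes $e$ in $T$ and no other write on $x$ lies strictly between them. $T$ satisfies the initial-write property if every read on $x$ is preceded in $T$ by some write on $x$. Correct reordering. $T'$ is a correctly reordered prefix of $T$ if $T'$ is a sequence of some of the events of $T$ such that: (i) for every thread $i$, the projection of $T'$ onto $i$ is a prefix of the projection of $T$ onto $i$; (ii) for every read $e$ in $T'$ whose last write w.r.t. $T$ is $f$, $f$ is in $T'$ and is also the last write of $e$ w.r.t. $T'$; (iii) for any two acquires $e_1,e_2$ on the same lock with $e_1$ before $e_2$ in $T'$, the matching release of $e_1$ is in $T'$ and lies strictly between $e_1$ and $e_2$. *)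

theory Defs
  imports Main "HOL-Library.Sublist"
begin

datatype ('v, 'l) action = Rd 'v | Wr 'v | Acq 'l | Rel 'l

text \<open>An event carries an identifier (so that events with the same thread and
operation can still be distinct), a thread id, and an action.\<close>
datatype ('v, 'l) event = Ev (eid: nat) (tid: nat) (act: "('v, 'l) action")

type_synonym ('v, 'l) trace = "('v, 'l) event list"

definition is_read :: "'v \<Rightarrow> ('v,'l) event \<Rightarrow> bool" where
  "is_read x e \<longleftrightarrow> act e = Rd x"
definition is_write :: "'v \<Rightarrow> ('v,'l) event \<Rightarrow> bool" where
  "is_write x e \<longleftrightarrow> act e = Wr x"
definition is_acq :: "'l \<Rightarrow> ('v,'l) event \<Rightarrow> bool" where
  "is_acq y e \<longleftrightarrow> act e = Acq y"
definition is_rel :: "'l \<Rightarrow> ('v,'l) event \<Rightarrow> bool" where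
  "is_rel y e \<longleftrightarrow> act e = Rel y"

definition is_any_read :: "('v,'l) event \<Rightarrow> bool" where
  "is_any_read e \<longleftrightarrow> (\<exists>x. is_read x e)"
definition is_any_write :: "('v,'l) event \<Rightarrow> bool" where
  "is_any_write e \<longleftrightarrow> (\<exists>x. is_write x e)"

definition before :: "('v,'l) trace \<Rightarrow> ('v,'l) event \<Rightarrow> ('v,'l) event \<Rightarrow> bool" where
  "before T a b \<longleftrightarrow> (\<exists>i j. i < j \<and> j < length T \<and> T ! i = a \<and> T ! j = b)"

definition held :: "('v,'l) trace \<Rightarrow> nat \<Rightarrow> 'l \<Rightarrow> bool" where
  "held T k y \<longleftrightarrow> (\<exists>j<k. is_acq y (T ! j) \<and>
      \<not> (\<exists>m. j < m \<and> m < k \<and> is_rel y (T ! m) \<and> tid (T ! m) = tid (T ! j)))"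

definition well_formed :: "('v,'l) trace \<Rightarrow> bool" where
  "well_formed T \<longleftrightarrow>
    (\<forall>k < length T. \<forall>y. is_acq y (T ! k) \<longrightarrow> \<not> held T k y) \<and>
    (\<forall>k < length T. \<forall>y. is_rel y (T ! k) \<longrightarrow>
        (\<exists>j<k. is_acq y (T ! j) \<and> tid (T ! j) = tid (T ! k) \<and>
            \<not> (\<exists>m. j < m \<and> m < k \<and> is_acq y (T ! m))))"

definition conflicting :: "('v,'l) event \<Rightarrow> ('v,'l) event \<Rightarrow> bool" where
  "conflicting a b \<longleftrightarrow> tid a \<noteq> tid b \<and>
     (\<exists>x. (is_read x a \<or> is_write x a) \<and> (is_read x b \<or> is_write x b) \<and>
          (is_write x a \<or> is_write x b))"

definition last_write :: "('v,'l) trace \<Rightarrow> ('v,'l) event \<Rightarrow> ('v,'l) event \<Rightarrow> bool" where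
  "last_write L e f \<longleftrightarrow> (\<exists>x. is_read x e \<and> is_write x f \<and>
     (\<exists>i j. i < j \<and> j < length L \<and> L ! i = f \<and> L ! j = e \<and>
        \<not> (\<exists>m. i < m \<and> m < j \<and> is_write x (L ! m))))"

definition initial_write :: "('v,'l) trace \<Rightarrow> bool" where
  "initial_write T \<longleftrightarrow> (\<forall>j < length T. \<forall>x. is_read x (T ! j) \<longrightarrow>
     (\<exists>i<j. is_write x (T ! i)))"

definition proj :: "('v,'l) trace \<Rightarrow> nat \<Rightarrow> ('v,'l) trace" where
  "proj T i = filter (\<lambda>e. tid e = i) T"

definition matching_rel :: "('v,'l) trace \<Rightarrow> ('v,'l) event \<Rightarrow> ('v,'l) event \<Rightarrow> bool" where
  "matching_rel T a r \<longleftrightarrow> (\<exists>y. is_acq y a \<and> is_rel y r \<and> tid a = tid r \<and>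
     (\<exists>i j. i < j \<and> j < length T \<and> T ! i = a \<and> T ! j = r \<and>
        \<not> (\<exists>m. i < m \<and> m < j \<and> (is_acq y (T ! m) \<or> is_rel y (T ! m)))))"

definition correct_reordered_prefix :: "('v,'l) trace \<Rightarrow> ('v,'l) trace \<Rightarrow> bool" where
  "correct_reordered_prefix T' T \<longleftrightarrow>
     distinct T' \<and> set T' \<subseteq> set T \<and>
     (\<forall>i. prefix (proj T' i) (proj T i)) \<and>
     (\<forall>e \<in> set T'. \<forall>f. last_write T e f \<longrightarrow> f \<in> set T' \<and> last_write T' e f) \<and>
     (\<forall>e1 e2 y. is_acq y e1 \<and> is_acq y e2 \<and> before T' e1 e2 \<longrightarrow>
        (\<exists>r. matching_rel T e1 r \<and> r \<in> set T' \<and> before T' e1 r \<and> before T' r e2))"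

definition imm_before :: "('v,'l) trace \<Rightarrow> ('v,'l) event \<Rightarrow> ('v,'l) event \<Rightarrow> bool" where
  "imm_before L a b \<longleftrightarrow> (\<exists>i. Suc i < length L \<and> L ! i = a \<and> L ! Suc i = b)"

end

theory Submission
  imports Defs
begin

lemma exists_last_write:
  assumes "initial_write T" "j < length T" "is_read x (T ! j)"
  shows "\<exists>g. last_write T (T ! j) g"
proof -
  define S where "S = {i. i < j \<and> is_write x (T ! i)}"
  have ne: "S \<noteq> {}" using assms unfolding initial_write_def S_def by blast
  have fin: "finite S" unfolding S_def by auto
  define i where "i = Max S"
  have iS: "i \<in> S" using ne fin i_def Max_in by blast
  have nm: "\<not> (\<exists>m. i < m \<and> m < j \<and> is_write x (T ! m))"
  proof
    assume "\<exists>m. i < m \<and> m < j \<and> is_write x (T ! m)"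
    then obtain m where "i < m" "m \<in> S" unfolding S_def by blast
    thus False using Max_ge[OF fin] i_def by fastforce
  qed
  show ?thesis unfolding last_write_def
    using iS nm assms S_def by (intro exI[of _ "T ! i"] exI[of _ x]) auto
qed

theorem mainTheorem11:
  fixes T :: "('v, 'l) trace" and e f :: "('v, 'l) event"
  assumes "distinct T"
    and "well_formed T"
    and "initial_write T"
    and "e \<in> set T" and "f \<in> set T"
    and "is_any_read e" and "is_any_write f"
    and "conflicting e f"
    and "\<exists>T1. correct_reordered_prefix T1 T \<and> imm_before T1 e f"
  shows "\<not> (\<exists>T2. correct_reordered_prefix T2 T \<and> imm_before T2 f e)"
proof
  assume "\<exists>T2. correct_reordered_prefix T2 T \<and> imm_before T2 f e"
  then obtain T2 where c2: "correct_reordered_prefix T2 T" and i2: "imm_before T2 f e" by blast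
  obtain T1 where c1: "correct_reordered_prefix T1 T" and i1: "imm_before T1 e f" using assms(9) by blast
  obtain x where ex: "act e = Rd x" using assms(6) unfolding is_any_read_def is_read_def by blast
  obtain x' where fx: "act f = Wr x'" using assms(7) unfolding is_any_write_def is_write_def by blast
  have "x' = x" using assms(8) ex fx unfolding conflicting_def is_read_def is_write_def by auto
  hence fx: "is_write x f" using fx by (simp add: is_write_def)
  have ne: "e \<noteq> f" using assms(8) unfolding conflicting_def by auto
  obtain j where j: "j < length T" "T ! j = e" using assms(4) by (metis in_set_conv_nth)
  obtain g where g: "last_write T e g"
    using exists_last_write[OF assms(3) j(1)] j ex is_read_def by metis
  have d2: "distinct T2" and d1: "distinct T1" using c1 c2 unfolding correct_reordered_prefix_def by auto
  obtain k where k: "Suc k < length T2" "T2 ! k = f" "T2 ! Suc k = e" using i2 imm_before_def by metis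
  have "e \<in> set T2" using k by (metis Suc_lessD nth_mem)
  hence lw2: "last_write T2 e g" using c2 g unfolding correct_reordered_prefix_def by blast
  then obtain y a b where ab: "is_read y e" "is_write y g" "a < b" "b < length T2" "T2 ! a = g" "T2 ! b = e"
     "\<not> (\<exists>m. a < m \<and> m < b \<and> is_write y (T2 ! m))" unfolding last_write_def by blast
  have yx: "y = x" using ab(1) ex by (simp add: is_read_def)
  have "b = Suc k" using d2 k ab by (metis nth_eq_iff_index_eq)
  hence "a = k"
  proof -
    assume bk: "b = Suc k"
    have "\<not> (a < k)" using ab(7) k(2) fx yx bk by auto
    thus "a = k" using ab(3) bk by simp
  qed
  hence gf: "g = f" using ab k by simp
  have "e \<in> set T1" using i1 unfolding imm_before_def by (metis Suc_lessD nth_mem)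
  hence "last_write T1 e f" using c1 g gf unfolding correct_reordered_prefix_def by blast
  then obtain a' b' where ab': "a' < b'" "b' < length T1" "T1 ! a' = f" "T1 ! b' = e"
    unfolding last_write_def by blast
  obtain k' where k': "Suc k' < length T1" "T1 ! k' = e" "T1 ! Suc k' = f" using i1 imm_before_def by metis
  have "b' = k'" using d1 k' ab' by (metis Suc_lessD less_trans nth_eq_iff_index_eq)
  moreover have "a' = Suc k'" using d1 k' ab' by (metis less_trans nth_eq_iff_index_eq)
  ultimately show False using ab' by simp
qed

end
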